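(* For every metric space $M$, $\dim_{\mathrm{MST}}(M)\le\dim_{\mathrm{Box}}(M)$. More precisely, if $\dim_{\mathrm{Box}}(M)<\beta<\infty$, then there is a constant $C<\infty$ such that $E_\beta(T)\le C$ for every minimal spanning tree $T$ on any finite set of distinct points of $M$.
   Context: A minimal spanning tree (MST) on a finite set of points in a metric space is a spanning tree of the complete graph on those points that minimizes the sum of the edge lengths; for an edge $e$, $\|e\|$ is the distance between its endpoints, and for a tree $T$ and $d\ge 0$, $E_d(T)=\sum_{e\in T}\|e\|^d$. The MST dimension is \[ \dim_{\mathrm{MST}}(M):=\inf\{d\ge 0:\ \exists C<\infty \text{ such that } E_d(T)\le C \text{ for every MST } T \text{ on any finite set of distinct points of } M\}, \] with $\inf\emptyset=\infty$. For $\epsilon>0$ let $N(\epsilon)\in\{0,1,2,\dots\}\cup\{\infty\}$ be the maximal number of pairwise disjoint open balls of radius $\epsilon$ centered at points of $M$. The upper box dimension is \[ \dim_{\mathrm{Box}}(M):=\limsup_{\epsilon\to0}\frac{\log N(\epsilon)}{\log(1/\epsilon)}. \] *)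

theory Defs
  imports "HOL-Analysis.Analysis" "HOL-Library.Extended_Nat"
begin

definition edge_graph :: "'a set \<Rightarrow> 'a set set \<Rightarrow> bool" where
  "edge_graph P T \<longleftrightarrow> (\<forall>e\<in>T. \<exists>x y. x \<in> P \<and> y \<in> P \<and> x \<noteq> y \<and> e = {x, y})"

definition graph_connected :: "'a set \<Rightarrow> 'a set set \<Rightarrow> bool" where
  "graph_connected P T \<longleftrightarrow>
     (\<forall>x\<in>P. \<forall>y\<in>P. (x, y) \<in> {(u, v). {u, v} \<in> T}\<^sup>*)"

text \<open>A spanning tree of the complete graph on P: a minimally connected spanning subgraph
  (equivalently, connected and acyclic).\<close>
definition spanning_tree :: "'a set \<Rightarrow> 'a set set \<Rightarrow> bool" where
  "spanning_tree P T \<longleftrightarrow> edge_graph P T \<and> graph_connected P T \<and>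
     (\<forall>e\<in>T. \<not> graph_connected P (T - {e}))"

text \<open>Length of an edge {x,y}: d x y (written as the max distance within the edge).\<close>
definition edge_len :: "('a \<Rightarrow> 'a \<Rightarrow> real) \<Rightarrow> 'a set \<Rightarrow> real" where
  "edge_len d e = Sup ((\<lambda>(x, y). d x y) ` (e \<times> e))"

definition tree_energy :: "('a \<Rightarrow> 'a \<Rightarrow> real) \<Rightarrow> real \<Rightarrow> 'a set set \<Rightarrow> real" where
  "tree_energy d \<beta> T = (\<Sum>e\<in>T. edge_len d e powr \<beta>)"

definition is_MST :: "'a set \<Rightarrow> ('a \<Rightarrow> 'a \<Rightarrow> real) \<Rightarrow> 'a set \<Rightarrow> 'a set set \<Rightarrow> bool" where
  "is_MST M d P T \<longleftrightarrow> finite P \<and> P \<subseteq> M \<and> spanning_tree P T \<and>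
     (\<forall>T'. spanning_tree P T' \<longrightarrow> (\<Sum>e\<in>T. edge_len d e) \<le> (\<Sum>e\<in>T'. edge_len d e))"

definition dim_MST :: "'a set \<Rightarrow> ('a \<Rightarrow> 'a \<Rightarrow> real) \<Rightarrow> ereal" where
  "dim_MST M d = Inf {ereal \<beta> | \<beta>. \<beta> \<ge> 0 \<and>
     (\<exists>C. \<forall>P T. is_MST M d P T \<longrightarrow> tree_energy d \<beta> T \<le> C)}"

definition packing_number :: "'a set \<Rightarrow> ('a \<Rightarrow> 'a \<Rightarrow> real) \<Rightarrow> real \<Rightarrow> enat" where
  "packing_number M d \<epsilon> = Sup {enat (card S) | S. finite S \<and> S \<subseteq> M \<and>
     pairwise (\<lambda>x y. disjnt (Metric_space.mball M d x \<epsilon>) (Metric_space.mball M d y \<epsilon>)) S}"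

text \<open>log N(\<epsilon>) / log(1/\<epsilon>) as an extended real (log \<infinity> = \<infinity>, log 0 = -\<infinity>).\<close>
definition box_ratio :: "'a set \<Rightarrow> ('a \<Rightarrow> 'a \<Rightarrow> real) \<Rightarrow> real \<Rightarrow> ereal" where
  "box_ratio M d \<epsilon> =
     (case packing_number M d \<epsilon> of
        \<infinity> \<Rightarrow> \<infinity>
      | enat n \<Rightarrow> (if n = 0 then - \<infinity> else ereal (ln (real n) / ln (1 / \<epsilon>))))"

definition dim_Box :: "'a set \<Rightarrow> ('a \<Rightarrow> 'a \<Rightarrow> real) \<Rightarrow> ereal" where
  "dim_Box M d = Limsup (at_right 0) (box_ratio M d)"

end

theory Submission
  imports Defs
begin


definition Ed :: "'a set set \<Rightarrow> ('a \<times> 'a) set" where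
  "Ed H = {(u, v). {u, v} \<in> H}"

lemma gc_Ed: "graph_connected P T \<longleftrightarrow> (\<forall>x\<in>P. \<forall>y\<in>P. (x, y) \<in> (Ed T)\<^sup>*)"
  unfolding graph_connected_def Ed_def by simp

lemma Ed_sym: "(u, v) \<in> (Ed H)\<^sup>* \<Longrightarrow> (v, u) \<in> (Ed H)\<^sup>*"
proof -
  have "sym (Ed H)" unfolding Ed_def sym_def by (auto simp: insert_commute)
  hence "sym ((Ed H)\<^sup>*)" by (rule sym_rtrancl)
  thus "(u, v) \<in> (Ed H)\<^sup>* \<Longrightarrow> (v, u) \<in> (Ed H)\<^sup>*" by (meson symD)
qed

lemma Ed_mono: "H \<subseteq> H' \<Longrightarrow> (u, v) \<in> (Ed H)\<^sup>* \<Longrightarrow> (u, v) \<in> (Ed H')\<^sup>*"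
proof -
  assume "H \<subseteq> H'"
  hence "Ed H \<subseteq> Ed H'" unfolding Ed_def by auto
  thus "(u, v) \<in> (Ed H)\<^sup>* \<Longrightarrow> (u, v) \<in> (Ed H')\<^sup>*" using rtrancl_mono by blast
qed

lemma Ed_edge: "{u, v} \<in> H \<Longrightarrow> (u, v) \<in> (Ed H)\<^sup>*"
  unfolding Ed_def by auto

lemma Ed_trans: "(u, v) \<in> (Ed H)\<^sup>* \<Longrightarrow> (v, w) \<in> (Ed H)\<^sup>* \<Longrightarrow> (u, w) \<in> (Ed H)\<^sup>*"
  by (rule rtrancl_trans)

lemma Ed_reroute:
  assumes "\<forall>e\<in>G - G'. \<exists>x y. e = {x, y} \<and> (x, y) \<in> (Ed G')\<^sup>*"
  shows "(Ed G)\<^sup>* \<subseteq> (Ed G')\<^sup>*"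
proof -
  have "Ed G \<subseteq> (Ed G')\<^sup>*"
  proof
    fix p assume "p \<in> Ed G"
    then obtain u v where p: "p = (u, v)" and uv: "{u, v} \<in> G" unfolding Ed_def by auto
    show "p \<in> (Ed G')\<^sup>*"
    proof (cases "{u, v} \<in> G'")
      case True thus ?thesis using p Ed_edge[of u v G'] by simp
    next
      case False
      hence "{u, v} \<in> G - G'" using uv by simp
      then obtain x y where xy: "{u, v} = {x, y}" "(x, y) \<in> (Ed G')\<^sup>*"
        using bspec[OF assms] by metis
      from xy(1) have "(u = x \<and> v = y) \<or> (u = y \<and> v = x)" by (simp add: doubleton_eq_iff)
      thus ?thesis
      proof
        assume "u = x \<and> v = y" thus ?thesis using p xy(2) by simp
      next
        assume "u = y \<and> v = x" thus ?thesis using p Ed_sym[OF xy(2)] by simp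
      qed
    qed
  qed
  hence "(Ed G)\<^sup>* \<subseteq> ((Ed G')\<^sup>*)\<^sup>*" by (rule rtrancl_mono)
  thus ?thesis by simp
qed

lemma Ed_split:
  assumes "(u, w) \<in> (Ed G)\<^sup>*" "f = {a, b}"
  shows "(u, w) \<in> (Ed (G - {f}))\<^sup>* \<or> (u, a) \<in> (Ed (G - {f}))\<^sup>* \<or> (u, b) \<in> (Ed (G - {f}))\<^sup>*"
  using assms(1)
proof (induction rule: rtrancl_induct)
  case base thus ?case by simp
next
  case (step y z)
  from step.hyps(2) have yz: "{y, z} \<in> G" unfolding Ed_def by auto
  show ?case
  proof (cases "{y, z} = f")
    case True
    hence "y = a \<or> y = b" using assms(2) by (auto simp: doubleton_eq_iff)
    thus ?thesis using step.IH by (elim disjE) simp_all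
  next
    case False
    hence "(y, z) \<in> Ed (G - {f})" using yz unfolding Ed_def by auto
    from step.IH show ?thesis
    proof (elim disjE)
      assume "(u, y) \<in> (Ed (G - {f}))\<^sup>*"
      hence "(u, z) \<in> (Ed (G - {f}))\<^sup>*" using \<open>(y, z) \<in> Ed (G - {f})\<close> by simp
      thus ?thesis by simp
    qed simp_all
  qed
qed

lemma Ed_join: "(u, w) \<in> (Ed H)\<^sup>* \<Longrightarrow> (v, w) \<in> (Ed H)\<^sup>* \<Longrightarrow> (u, v) \<in> (Ed H)\<^sup>*"
  by (rule Ed_trans, assumption, rule Ed_sym)

lemma Ed_split2:
  assumes "(u, v) \<in> (Ed G)\<^sup>*" "(u, v) \<notin> (Ed (G - {f}))\<^sup>*" "f = {a, b}"
  shows "((u, a) \<in> (Ed (G - {f}))\<^sup>* \<and> (v, b) \<in> (Ed (G - {f}))\<^sup>*) \<or>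
         ((u, b) \<in> (Ed (G - {f}))\<^sup>* \<and> (v, a) \<in> (Ed (G - {f}))\<^sup>*)"
proof -
  have 1: "(u, a) \<in> (Ed (G - {f}))\<^sup>* \<or> (u, b) \<in> (Ed (G - {f}))\<^sup>*"
    using Ed_split[OF assms(1) assms(3)] assms(2) by simp
  have vu: "(v, u) \<in> (Ed G)\<^sup>*" using assms(1) by (rule Ed_sym)
  have nvu: "(v, u) \<notin> (Ed (G - {f}))\<^sup>*"
  proof
    assume "(v, u) \<in> (Ed (G - {f}))\<^sup>*"
    from Ed_sym[OF this] assms(2) show False by simp
  qed
  have 2: "(v, a) \<in> (Ed (G - {f}))\<^sup>* \<or> (v, b) \<in> (Ed (G - {f}))\<^sup>*"
    using Ed_split[OF vu assms(3)] nvu by simp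
  from 1 2 show ?thesis
    using assms(2) Ed_join[of u a "G - {f}" v] Ed_join[of u b "G - {f}" v]
    by (elim disjE) simp_all
qed

lemma st_fin:
  assumes "finite P" "edge_graph P T" shows "finite T"
proof -
  have "T \<subseteq> Pow P" using assms(2) unfolding edge_graph_def by auto
  thus ?thesis using assms(1) finite_subset by blast
qed

lemma st_edge:
  assumes "spanning_tree P T" "f \<in> T"
  obtains a b where "f = {a, b}" "a \<in> P" "b \<in> P" "a \<noteq> b"
  using assms unfolding spanning_tree_def edge_graph_def by blast

lemma st_bridge:
  assumes "spanning_tree P T" "f \<in> T" "f = {a, b}"
  shows "(a, b) \<notin> (Ed (T - {f}))\<^sup>*"
proof
  assume ab: "(a, b) \<in> (Ed (T - {f}))\<^sup>*"
  have "(Ed T)\<^sup>* \<subseteq> (Ed (T - {f}))\<^sup>*"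
    by (rule Ed_reroute) (use ab assms(3) in auto)
  hence "graph_connected P (T - {f})" using assms(1) unfolding spanning_tree_def gc_Ed by blast
  thus False using assms(1,2) unfolding spanning_tree_def by blast
qed

lemma st_single:
  assumes "spanning_tree P T" "finite L" "L \<subseteq> T" "(u, v) \<in> (Ed T)\<^sup>*" "(u, v) \<notin> (Ed (T - L))\<^sup>*"
  shows "\<exists>f\<in>L. (u, v) \<notin> (Ed (T - {f}))\<^sup>*"
  using assms(2,3,5)
proof (induction L rule: finite_induct)
  case empty thus ?case using assms(4) by simp
next
  case (insert f L)
  show ?case
  proof (cases "(u, v) \<in> (Ed (T - L))\<^sup>*")
    case False thus ?thesis using insert by auto
  next
    case True
    have fT: "f \<in> T" using insert by auto
    obtain a b where ab: "f = {a, b}" using st_edge[OF assms(1) fT] by metis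
    have eq: "T - insert f L = (T - L) - {f}" by auto
    have nc: "(u, v) \<notin> (Ed ((T - L) - {f}))\<^sup>*" using insert.prems eq by simp
    have sub: "(T - L) - {f} \<subseteq> T - {f}" by auto
    have "(u, v) \<notin> (Ed (T - {f}))\<^sup>*"
    proof
      assume uv: "(u, v) \<in> (Ed (T - {f}))\<^sup>*"
      from Ed_split2[OF True nc ab]
      have "(a, b) \<in> (Ed (T - {f}))\<^sup>*"
      proof (elim disjE conjE)
        assume h: "(u, a) \<in> (Ed (T - L - {f}))\<^sup>*" "(v, b) \<in> (Ed (T - L - {f}))\<^sup>*"
        have "(a, u) \<in> (Ed (T - {f}))\<^sup>*" using Ed_sym[OF Ed_mono[OF sub h(1)]] .
        moreover have "(v, b) \<in> (Ed (T - {f}))\<^sup>*" using Ed_mono[OF sub h(2)] .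
        ultimately show ?thesis using uv Ed_trans by metis
      next
        assume h: "(u, b) \<in> (Ed (T - L - {f}))\<^sup>*" "(v, a) \<in> (Ed (T - L - {f}))\<^sup>*"
        have "(a, v) \<in> (Ed (T - {f}))\<^sup>*" using Ed_sym[OF Ed_mono[OF sub h(2)]] .
        moreover have "(u, b) \<in> (Ed (T - {f}))\<^sup>*" using Ed_mono[OF sub h(1)] .
        moreover have "(v, u) \<in> (Ed (T - {f}))\<^sup>*" using Ed_sym[OF uv] .
        ultimately show ?thesis using Ed_trans by metis
      qed
      thus False using st_bridge[OF assms(1) fT ab] by simp
    qed
    thus ?thesis by auto
  qed
qed

lemma sub_tree_exists:
  assumes "finite G" "edge_graph P G" "graph_connected P G"
  shows "\<exists>T\<subseteq>G. spanning_tree P T"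
proof -
  obtain H where H: "H \<subseteq> G \<and> graph_connected P H"
    and min: "\<forall>H'. H' \<subseteq> G \<and> graph_connected P H' \<longrightarrow> card H \<le> card H'"
    using ex_has_least_nat[of "\<lambda>H. H \<subseteq> G \<and> graph_connected P H" G card] assms(3) by blast
  have fin: "finite H" using H assms(1) finite_subset by blast
  have "edge_graph P H" using H assms(2) unfolding edge_graph_def by blast
  moreover have "\<forall>e\<in>H. \<not> graph_connected P (H - {e})"
  proof (intro ballI notI)
    fix e assume e: "e \<in> H" "graph_connected P (H - {e})"
    have "card H \<le> card (H - {e})" using min H e by blast
    moreover have "card (H - {e}) < card H" by (rule card_Diff1_less[OF fin e(1)])
    ultimately show False by simp
  qed
  ultimately show ?thesis using H unfolding spanning_tree_def by blast
qed



definition Rc :: "'a set \<Rightarrow> 'a set set \<Rightarrow> ('a \<times> 'a) set" where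
  "Rc P H = {(u, v). u \<in> P \<and> v \<in> P \<and> (u, v) \<in> (Ed H)\<^sup>*}"

definition cls :: "('a \<times> 'a) set \<Rightarrow> 'a set \<Rightarrow> 'a set set" where
  "cls R P = (\<lambda>a. R `` {a}) ` P"

lemma img_comp:
  assumes "R1 \<subseteq> R2" "trans R2" "(a, a) \<in> R1"
  shows "R2 `` (R1 `` {a}) = R2 `` {a}"
proof
  show "R2 `` (R1 `` {a}) \<subseteq> R2 `` {a}"
  proof
    fix z assume "z \<in> R2 `` (R1 `` {a})"
    then obtain w where "(a, w) \<in> R1" "(w, z) \<in> R2" by auto
    hence "(a, w) \<in> R2" "(w, z) \<in> R2" using assms(1) by auto
    hence "(a, z) \<in> R2" using assms(2) by (meson transD)
    thus "z \<in> R2 `` {a}" by simp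
  qed
  show "R2 `` {a} \<subseteq> R2 `` (R1 `` {a})" using assms(3) by auto
qed

lemma quot_count:
  assumes "finite P" "R1 \<subseteq> R2" "trans R2" "sym R2" "\<forall>a\<in>P. (a, a) \<in> R1"
    "x \<in> P" "y \<in> P" "(x, y) \<in> R2" "(x, y) \<notin> R1"
  shows "card (cls R2 P) + 1 \<le> card (cls R1 P)"
proof -
  have fin1: "finite (cls R1 P)" unfolding cls_def using assms(1) by simp
  have yin: "R1 `` {y} \<in> cls R1 P" unfolding cls_def using assms(7) by simp
  have xin: "R1 `` {x} \<in> cls R1 P - {R1 `` {y}}"
  proof -
    have "y \<in> R1 `` {y}" using assms(5,7) by auto
    hence "R1 `` {x} \<noteq> R1 `` {y}" using assms(9) by auto
    thus ?thesis unfolding cls_def using assms(6) by simp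
  qed
  have yx: "(y, x) \<in> R2" using assms(4,8) by (meson symD)
  have eqxy: "R2 `` {y} = R2 `` {x}"
  proof
    show "R2 `` {y} \<subseteq> R2 `` {x}" using transD[OF assms(3) assms(8)] by blast
    show "R2 `` {x} \<subseteq> R2 `` {y}" using transD[OF assms(3) yx] by blast
  qed
  have "cls R2 P \<subseteq> (\<lambda>C. R2 `` C) ` (cls R1 P - {R1 `` {y}})"
  proof
    fix C assume "C \<in> cls R2 P"
    then obtain a where a: "a \<in> P" "C = R2 `` {a}" unfolding cls_def by auto
    show "C \<in> (\<lambda>C. R2 `` C) ` (cls R1 P - {R1 `` {y}})"
    proof (cases "R1 `` {a} = R1 `` {y}")
      case True
      have "C = R2 `` (R1 `` {a})" using a img_comp[OF assms(2,3)] assms(5) by simp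
      also have "\<dots> = R2 `` (R1 `` {y})" using True by simp
      also have "\<dots> = R2 `` {x}" using img_comp[OF assms(2,3)] assms(5,7) eqxy by simp
      also have "\<dots> = R2 `` (R1 `` {x})" using img_comp[OF assms(2,3)] assms(5,6) by simp
      finally show ?thesis using xin by blast
    next
      case False
      have "C = R2 `` (R1 `` {a})" using a img_comp[OF assms(2,3)] assms(5) by simp
      moreover have "R1 `` {a} \<in> cls R1 P - {R1 `` {y}}" using False a unfolding cls_def by simp
      ultimately show ?thesis by blast
    qed
  qed
  hence "card (cls R2 P) \<le> card ((\<lambda>C. R2 `` C) ` (cls R1 P - {R1 `` {y}}))"
    by (rule card_mono[OF finite_imageI[OF finite_Diff[OF fin1]]])
  also have "\<dots> \<le> card (cls R1 P - {R1 `` {y}})" by (rule card_image_le[OF finite_Diff[OF fin1]])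
  also have "\<dots> = card (cls R1 P) - 1" using yin fin1 by simp
  finally have "card (cls R2 P) \<le> card (cls R1 P) - 1" .
  moreover have "card (cls R1 P) > 0" using yin fin1 card_gt_0_iff by blast
  ultimately show ?thesis by linarith
qed

lemma Rc_iff: "(u, v) \<in> Rc P H \<longleftrightarrow> u \<in> P \<and> v \<in> P \<and> (u, v) \<in> (Ed H)\<^sup>*"
  by (simp add: Rc_def)

lemma Rc_props: "trans (Rc P H)" "sym (Rc P H)" "\<forall>a\<in>P. (a, a) \<in> Rc P H"
proof -
  show "trans (Rc P H)"
  proof (rule transI)
    fix x y z assume h: "(x, y) \<in> Rc P H" "(y, z) \<in> Rc P H"
    have "(x, z) \<in> (Ed H)\<^sup>*" using Ed_trans[of x y H z] h unfolding Rc_iff by simp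
    thus "(x, z) \<in> Rc P H" using h unfolding Rc_iff by simp
  qed
  show "sym (Rc P H)"
  proof (rule symI)
    fix x y assume h: "(x, y) \<in> Rc P H"
    have "(y, x) \<in> (Ed H)\<^sup>*" using Ed_sym[of x y H] h unfolding Rc_iff by simp
    thus "(y, x) \<in> Rc P H" using h unfolding Rc_iff by simp
  qed
  show "\<forall>a\<in>P. (a, a) \<in> Rc P H" unfolding Rc_def by simp
qed

lemma Rc_mono: "H \<subseteq> H' \<Longrightarrow> Rc P H \<subseteq> Rc P H'"
proof
  fix p assume "H \<subseteq> H'" "p \<in> Rc P H"
  then obtain u v where "p = (u, v)" "u \<in> P" "v \<in> P" "(u, v) \<in> (Ed H)\<^sup>*"
    unfolding Rc_def by auto
  thus "p \<in> Rc P H'" using Ed_mono[OF \<open>H \<subseteq> H'\<close>, of u v] unfolding Rc_def by simp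
qed

lemma tree_count:
  assumes "finite P" "P \<noteq> {}" "spanning_tree P T" "D \<subseteq> T"
  shows "card D + 1 \<le> card (cls (Rc P (T - D)) P)"
proof -
  have finT: "finite T" using st_fin assms(1,3) unfolding spanning_tree_def by blast
  have "finite D" using finT assms(4) finite_subset by blast
  thus ?thesis using assms(4)
  proof (induction D rule: finite_induct)
    case empty
    have "cls (Rc P T) P \<noteq> {}" unfolding cls_def using assms(2) by simp
    moreover have "finite (cls (Rc P T) P)" unfolding cls_def using assms(1) by simp
    ultimately show ?case by (simp add: Suc_leI card_gt_0_iff)
  next
    case (insert f D)
    have fT: "f \<in> T" "f \<notin> D" using insert by auto
    obtain a b where ab: "f = {a, b}" "a \<in> P" "b \<in> P" using st_edge[OF assms(3) fT(1)] by metis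
    have eq: "T - insert f D = (T - D) - {f}" by auto
    have "f \<in> T - D" using fT by simp
    hence "(a, b) \<in> (Ed (T - D))\<^sup>*" using ab(1) Ed_edge[of a b "T - D"] by simp
    hence in2: "(a, b) \<in> Rc P (T - D)" unfolding Rc_def using ab by simp
    have "(a, b) \<notin> (Ed ((T - D) - {f}))\<^sup>*"
    proof
      assume "(a, b) \<in> (Ed ((T - D) - {f}))\<^sup>*"
      hence "(a, b) \<in> (Ed (T - {f}))\<^sup>*" by (rule Ed_mono[rotated]) auto
      thus False using st_bridge[OF assms(3) fT(1) ab(1)] by simp
    qed
    hence nin: "(a, b) \<notin> Rc P (T - insert f D)" unfolding Rc_def eq by simp
    have "card (cls (Rc P (T - D)) P) + 1 \<le> card (cls (Rc P (T - insert f D)) P)"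
      by (rule quot_count[OF assms(1) Rc_mono Rc_props(1,2) Rc_props(3) ab(2,3) in2 nin]) auto
    moreover have "card D + 1 \<le> card (cls (Rc P (T - D)) P)" using insert by auto
    ultimately show ?case using insert by simp
  qed
qed

lemma reps:
  assumes "finite P" "D \<subseteq> T" "finite P" "P \<noteq> {}" "spanning_tree P T"
  obtains S where "S \<subseteq> P" "card D + 1 \<le> card S"
    "\<forall>s\<in>S. \<forall>t\<in>S. s \<noteq> t \<longrightarrow> (s, t) \<notin> (Ed (T - D))\<^sup>*"
proof -
  let ?R = "Rc P (T - D)"
  have "cls ?R P \<subseteq> (\<lambda>a. ?R `` {a}) ` P" unfolding cls_def by simp
  from subset_image_inj[THEN iffD1, OF this]
  obtain S where S: "S \<subseteq> P" "inj_on (\<lambda>a. ?R `` {a}) S" "cls ?R P = (\<lambda>a. ?R `` {a}) ` S"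
    by blast
  have "card S = card (cls ?R P)" using S(3) card_image[OF S(2)] by simp
  hence c: "card D + 1 \<le> card S" using tree_count[OF assms(1,4,5,2)] by simp
  have "\<forall>s\<in>S. \<forall>t\<in>S. s \<noteq> t \<longrightarrow> (s, t) \<notin> (Ed (T - D))\<^sup>*"
  proof (intro ballI impI notI)
    fix s t assume st: "s \<in> S" "t \<in> S" "s \<noteq> t" "(s, t) \<in> (Ed (T - D))\<^sup>*"
    have r1: "(s, t) \<in> ?R" using st S(1) unfolding Rc_def by auto
    have r2: "(t, s) \<in> ?R" using r1 Rc_props(2) by (meson symD)
    have "?R `` {s} = ?R `` {t}"
      using transD[OF Rc_props(1) r1] transD[OF Rc_props(1) r2] by blast
    from inj_onD[OF S(2) this st(1) st(2)] st(3) show False by simp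
  qed
  thus ?thesis by (rule that[OF S(1) c])
qed



lemma edge_len_eq:
  assumes "Metric_space M d" "x \<in> M" "y \<in> M"
  shows "edge_len d {x, y} = d x y"
proof -
  interpret Metric_space M d by fact
  have img: "(\<lambda>(u, v). d u v) ` ({x, y} \<times> {x, y}) = {0, d x y}"
    using assms(2,3) commute[of y x] by auto
  show ?thesis unfolding edge_len_def img
    by (rule cSup_eq_maximum) auto
qed

lemma el_nonneg:
  assumes "Metric_space M d" "P \<subseteq> M" "edge_graph P G" "e \<in> G"
  shows "edge_len d e \<ge> 0"
proof -
  obtain x y where "e = {x, y}" "x \<in> P" "y \<in> P" using assms(3,4) unfolding edge_graph_def by blast
  moreover have "x \<in> M" "y \<in> M" using calculation(2,3) assms(2) by auto
  ultimately show ?thesis using edge_len_eq[OF assms(1), of x y] Metric_space.nonneg[OF assms(1)] by simp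
qed

lemma mst_sep:
  assumes ms: "Metric_space M d" and mst: "is_MST M d P T" and Pne: "P \<noteq> {}" and eps: "0 \<le> \<epsilon>"
  shows "\<exists>S\<subseteq>P. card {e\<in>T. edge_len d e > \<epsilon>} + 1 \<le> card S \<and>
           (\<forall>s\<in>S. \<forall>t\<in>S. s \<noteq> t \<longrightarrow> d s t > \<epsilon>)"
proof -
  define L where "L = {e\<in>T. edge_len d e > \<epsilon>}"
  have finP: "finite P" and PM: "P \<subseteq> M" and st: "spanning_tree P T"
    and minT: "\<And>T'. spanning_tree P T' \<Longrightarrow> (\<Sum>e\<in>T. edge_len d e) \<le> (\<Sum>e\<in>T'. edge_len d e)"
    using mst unfolding is_MST_def by auto
  have egT: "edge_graph P T" and gcT: "graph_connected P T" using st unfolding spanning_tree_def by auto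
  have finT: "finite T" using st_fin[OF finP egT] .
  have LT: "L \<subseteq> T" unfolding L_def by auto
  have finL: "finite L" using finT LT finite_subset by blast
  obtain S where S: "S \<subseteq> P" "card L + 1 \<le> card S"
    "\<forall>s\<in>S. \<forall>t\<in>S. s \<noteq> t \<longrightarrow> (s, t) \<notin> (Ed (T - L))\<^sup>*"
    using reps[OF finP LT finP Pne st] by blast
  have "\<forall>s\<in>S. \<forall>t\<in>S. s \<noteq> t \<longrightarrow> d s t > \<epsilon>"
  proof (intro ballI impI)
    fix s t assume s: "s \<in> S" and t: "t \<in> S" and neq: "s \<noteq> t"
    have sP: "s \<in> P" and tP: "t \<in> P" using s t S(1) by auto
    show "d s t > \<epsilon>"
    proof (rule ccontr)
      assume "\<not> d s t > \<epsilon>"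
      hence dst: "d s t \<le> \<epsilon>" by simp
      have conn: "(s, t) \<in> (Ed T)\<^sup>*" using gcT sP tP unfolding gc_Ed by blast
      have nconn: "(s, t) \<notin> (Ed (T - L))\<^sup>*" using S(3) s t neq by blast
      obtain f where fL: "f \<in> L" and nf: "(s, t) \<notin> (Ed (T - {f}))\<^sup>*"
        using st_single[OF st finL LT conn nconn] by blast
      have fT: "f \<in> T" using fL LT by auto
      obtain a b where ab: "f = {a, b}" "a \<in> P" "b \<in> P" using st_edge[OF st fT] by metis
      define T' where "T' = insert {s, t} (T - {f})"
      have sub1: "T - {f} \<subseteq> T'" unfolding T'_def by auto
      have stT': "(s, t) \<in> (Ed T')\<^sup>*" using Ed_edge[of s t T'] unfolding T'_def by simp
      have tsT': "(t, s) \<in> (Ed T')\<^sup>*" using Ed_sym[OF stT'] .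
      from Ed_split2[OF conn nf ab(1)]
      have abT': "(a, b) \<in> (Ed T')\<^sup>*"
      proof (elim disjE conjE)
        assume h: "(s, a) \<in> (Ed (T - {f}))\<^sup>*" "(t, b) \<in> (Ed (T - {f}))\<^sup>*"
        have 1: "(a, s) \<in> (Ed T')\<^sup>*" using Ed_sym[OF Ed_mono[OF sub1 h(1)]] .
        have 2: "(t, b) \<in> (Ed T')\<^sup>*" using Ed_mono[OF sub1 h(2)] .
        show ?thesis using Ed_trans[OF Ed_trans[OF 1 stT'] 2] .
      next
        assume h: "(s, b) \<in> (Ed (T - {f}))\<^sup>*" "(t, a) \<in> (Ed (T - {f}))\<^sup>*"
        have 1: "(a, t) \<in> (Ed T')\<^sup>*" using Ed_sym[OF Ed_mono[OF sub1 h(2)]] .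
        have 2: "(s, b) \<in> (Ed T')\<^sup>*" using Ed_mono[OF sub1 h(1)] .
        show ?thesis using Ed_trans[OF Ed_trans[OF 1 tsT'] 2] .
      qed
      have "\<forall>e\<in>T - T'. \<exists>x y. e = {x, y} \<and> (x, y) \<in> (Ed T')\<^sup>*"
      proof
        fix e assume "e \<in> T - T'"
        hence "e = f" unfolding T'_def by auto
        thus "\<exists>x y. e = {x, y} \<and> (x, y) \<in> (Ed T')\<^sup>*" using ab(1) abT' by blast
      qed
      hence "(Ed T)\<^sup>* \<subseteq> (Ed T')\<^sup>*" by (rule Ed_reroute)
      hence gcT': "graph_connected P T'" using gcT unfolding gc_Ed by blast
      have egT': "edge_graph P T'"
        using egT sP tP neq unfolding edge_graph_def T'_def by blast
      have finT': "finite T'" unfolding T'_def using finT by simp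
      obtain T'' where T'': "T'' \<subseteq> T'" "spanning_tree P T''"
        using sub_tree_exists[OF finT' egT' gcT'] by blast
      have "(\<Sum>e\<in>T. edge_len d e) \<le> (\<Sum>e\<in>T''. edge_len d e)" using minT[OF T''(2)] .
      also have "\<dots> \<le> (\<Sum>e\<in>T'. edge_len d e)"
        by (rule sum_mono2[OF finT' T''(1)]) (use el_nonneg[OF ms PM egT'] in blast)
      also have "\<dots> \<le> edge_len d {s, t} + (\<Sum>e\<in>T - {f}. edge_len d e)"
      proof -
        have "edge_len d {s, t} \<ge> 0" using el_nonneg[OF ms PM egT'] unfolding T'_def by blast
        thus ?thesis unfolding T'_def using finT by (simp add: sum.insert_if)
      qed
      also have "\<dots> = d s t + (\<Sum>e\<in>T. edge_len d e) - edge_len d f"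
        using edge_len_eq[OF ms, of s t] subsetD[OF PM sP] subsetD[OF PM tP] fT finT by (simp add: sum_diff1)
      finally have "edge_len d f \<le> d s t" by simp
      moreover have "edge_len d f > \<epsilon>" using fL unfolding L_def by simp
      ultimately show False using dst by simp
    qed
  qed
  thus ?thesis using S(1,2) unfolding L_def by blast
qed



definition pk :: "'a set \<Rightarrow> ('a \<Rightarrow> 'a \<Rightarrow> real) \<Rightarrow> real \<Rightarrow> 'a set \<Rightarrow> bool" where
  "pk M d r S \<longleftrightarrow> finite S \<and> S \<subseteq> M \<and>
     pairwise (\<lambda>x y. disjnt (Metric_space.mball M d x r) (Metric_space.mball M d y r)) S"

lemma pk_le: "pk M d r S \<Longrightarrow> enat (card S) \<le> packing_number M d r"
  unfolding packing_number_def pk_def by (rule Sup_upper) blast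

lemma sep_pk:
  assumes ms: "Metric_space M d" and "finite S" "S \<subseteq> M"
    and sep: "\<forall>s\<in>S. \<forall>t\<in>S. s \<noteq> t \<longrightarrow> d s t > \<epsilon>"
  shows "pk M d (\<epsilon> / 2) S"
proof -
  interpret Metric_space M d by fact
  have "pairwise (\<lambda>x y. disjnt (mball x (\<epsilon> / 2)) (mball y (\<epsilon> / 2))) S"
  proof (unfold pairwise_def, intro ballI impI)
    fix x y assume xy: "x \<in> S" "y \<in> S" "x \<noteq> y"
    show "disjnt (mball x (\<epsilon> / 2)) (mball y (\<epsilon> / 2))"
    unfolding disjnt_iff
    proof (intro allI notI)
      fix z assume "z \<in> mball x (\<epsilon> / 2) \<and> z \<in> mball y (\<epsilon> / 2)"
      hence z: "z \<in> mball x (\<epsilon> / 2)" "z \<in> mball y (\<epsilon> / 2)" by auto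
      hence "d x y \<le> d x z + d z y" using triangle by auto
      also have "\<dots> < \<epsilon>" using z commute[of z y] by simp
      finally show False using sep xy by force
    qed
  qed
  thus ?thesis unfolding pk_def using assms(2,3) by simp
qed

lemma ratio_bound:
  assumes "0 < r" "r < 1" "box_ratio M d r < ereal \<alpha>" "pk M d r S"
  shows "real (card S) \<le> r powr (- \<alpha>)"
proof (cases "packing_number M d r")
  case infinity
  thus ?thesis using assms(3) unfolding box_ratio_def by simp
next
  case (enat n)
  have cs: "card S \<le> n" using pk_le[OF assms(4)] enat by simp
  show ?thesis
  proof (cases "n = 0")
    case True thus ?thesis using cs by simp
  next
    case False
    have lr: "ln (1 / r) > 0" using assms(1,2) by simp
    have "ln (real n) / ln (1 / r) < \<alpha>" using assms(3) False enat unfolding box_ratio_def by simp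
    hence "ln (real n) < \<alpha> * ln (1 / r)" using lr by (simp add: divide_less_eq)
    hence "exp (ln (real n)) < exp (\<alpha> * ln (1 / r))" by simp
    hence "real n < exp (\<alpha> * ln (1 / r))" using False by simp
    also have "exp (\<alpha> * ln (1 / r)) = r powr (- \<alpha>)"
      using assms(1) by (simp add: powr_def ln_div)
    finally show ?thesis using cs by linarith
  qed
qed

lemma dim_Box_nonneg:
  assumes "M \<noteq> {}"
  shows "0 \<le> dim_Box M d"
proof -
  obtain x0 where x0: "x0 \<in> M" using assms by blast
  have "eventually (\<lambda>r. 0 \<le> box_ratio M d r) (at_right (0::real))"
    unfolding eventually_at_right_field
  proof (intro exI[of _ 1] conjI allI impI)
    fix r :: real assume r: "0 < r" "r < 1"
    have "pk M d r {x0}" unfolding pk_def using x0 by simp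
    hence ge: "enat 1 \<le> packing_number M d r" using pk_le by fastforce
    show "0 \<le> box_ratio M d r"
    proof (cases "packing_number M d r")
      case infinity thus ?thesis unfolding box_ratio_def by simp
    next
      case (enat n)
      hence n: "n \<ge> 1" using ge by simp
      have "ln (1 / r) > 0" using r by simp
      moreover have "ln (real n) \<ge> 0" using n by simp
      ultimately show ?thesis using enat n unfolding box_ratio_def by simp
    qed
  qed simp
  thus ?thesis unfolding dim_Box_def by (intro le_Limsup) simp_all
qed

lemma bounded_from_pk:
  assumes ms: "Metric_space M d" and r: "0 < r" and K: "\<And>S. pk M d r S \<Longrightarrow> card S \<le> K"
  shows "\<exists>B. \<forall>x\<in>M. \<forall>y\<in>M. d x y \<le> B"
proof -
  interpret Metric_space M d by fact
  have "pk M d r {}" unfolding pk_def by simp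
  hence p0: "\<exists>S. pk M d r S \<and> card S = 0" by (intro exI[of _ "{}"]) simp
  have bd: "\<forall>y. (\<exists>S. pk M d r S \<and> card S = y) \<longrightarrow> y \<le> K" using K by blast
  obtain k where k: "\<exists>S. pk M d r S \<and> card S = k" and kmax: "\<forall>k'. (\<exists>S. pk M d r S \<and> card S = k') \<longrightarrow> k' \<le> k"
    using Nat.ex_has_greatest_nat[of "\<lambda>k. \<exists>S. pk M d r S \<and> card S = k", OF p0 bd] by blast
  then obtain S where S: "pk M d r S" "card S = k" by blast
  have finS: "finite S" and SM: "S \<subseteq> M" using S(1) unfolding pk_def by auto
  have near: "\<exists>s\<in>S. d x s < 2 * r" if x: "x \<in> M" for x
  proof (cases "x \<in> S")
    case True thus ?thesis using x r by (intro bexI[of _ x]) auto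
  next
    case False
    have ci: "card (insert x S) = k + 1" using False finS S(2) by simp
    have "\<not> pk M d r (insert x S)"
    proof
      assume "pk M d r (insert x S)"
      hence "card (insert x S) \<le> k" using kmax by blast
      thus False using ci by simp
    qed
    hence np: "\<not> pairwise (\<lambda>x y. disjnt (mball x r) (mball y r)) (insert x S)"
      unfolding pk_def using finS SM x by simp
    have pS: "pairwise (\<lambda>x y. disjnt (mball x r) (mball y r)) S" using S(1) unfolding pk_def by simp
    have "\<exists>s. s \<in> S \<and> s \<noteq> x \<and> \<not> (disjnt (mball x r) (mball s r) \<and> disjnt (mball s r) (mball x r))"
      using np pS unfolding pairwise_insert by blast
    then obtain s where s: "s \<in> S" "\<not> (disjnt (mball x r) (mball s r) \<and> disjnt (mball s r) (mball x r))"
      by blast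
    then obtain z where z: "z \<in> mball x r" "z \<in> mball s r" unfolding disjnt_iff by blast
    hence "d x s \<le> d x z + d z s" using triangle by auto
    also have "\<dots> < 2 * r" using z commute[of z s] by simp
    finally show ?thesis using s(1) by blast
  qed
  define B where "B = 4 * r + (\<Sum>p\<in>S \<times> S. d (fst p) (snd p))"
  have "d x y \<le> B" if xy: "x \<in> M" "y \<in> M" for x y
  proof -
    obtain s where s: "s \<in> S" "d x s < 2 * r" using near xy(1) by blast
    obtain t where t: "t \<in> S" "d y t < 2 * r" using near xy(2) by blast
    have sM: "s \<in> M" and tM: "t \<in> M" using s t SM by auto
    have "d s t \<le> (\<Sum>p\<in>S \<times> S. d (fst p) (snd p))"
      using member_le_sum[of "(s, t)" "S \<times> S" "\<lambda>p. d (fst p) (snd p)"] s t finS by simp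
    moreover have "d x y \<le> d x s + d s y" using triangle xy sM by blast
    moreover have "d s y \<le> d s t + d t y" using triangle xy sM tM by blast
    moreover have "d t y = d y t" by (rule commute)
    ultimately show ?thesis unfolding B_def using s t by linarith
  qed
  thus ?thesis by blast
qed



lemma mst_count:
  assumes ms: "Metric_space M d" and mst: "is_MST M d P T" and Pne: "P \<noteq> {}"
    and eps: "0 < \<epsilon>" "\<epsilon> / 2 < 1" and br: "box_ratio M d (\<epsilon> / 2) < ereal \<alpha>"
  shows "real (card {e\<in>T. edge_len d e > \<epsilon>}) + 1 \<le> (\<epsilon> / 2) powr (- \<alpha>)"
proof -
  obtain S where S: "S \<subseteq> P" "card {e\<in>T. edge_len d e > \<epsilon>} + 1 \<le> card S"
    "\<forall>s\<in>S. \<forall>t\<in>S. s \<noteq> t \<longrightarrow> d s t > \<epsilon>"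
    using mst_sep[OF ms mst Pne less_imp_le[OF eps(1)]] by blast
  have finP: "finite P" and PM: "P \<subseteq> M" using mst unfolding is_MST_def by auto
  have fS: "finite S" using S(1) finP finite_subset by blast
  have SM: "S \<subseteq> M" using S(1) PM by blast
  have pkS: "pk M d (\<epsilon> / 2) S" by (rule sep_pk[OF ms fS SM S(3)])
  have e2: "0 < \<epsilon> / 2" using eps(1) by simp
  have "real (card S) \<le> (\<epsilon> / 2) powr (- \<alpha>)" by (rule ratio_bound[OF e2 eps(2) br pkS])
  moreover have "real (card {e\<in>T. edge_len d e > \<epsilon>}) + 1 \<le> real (card S)" using S(2) by linarith
  ultimately show ?thesis by linarith
qed

lemma geom_term:
  fixes c \<alpha> \<beta> :: real
  assumes c: "0 < c"
  shows "(c * (1/2) ^ (j + 2)) powr (- \<alpha>) * (c * (1/2) ^ j) powr \<beta>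
       = (4 powr \<alpha> * c powr (\<beta> - \<alpha>)) * ((1/2) powr (\<beta> - \<alpha>)) ^ j"
proof -
  define t where "t = c * (1/2::real) ^ j"
  have t: "0 < t" unfolding t_def using c by simp
  have e1: "c * (1/2::real) ^ (j + 2) = t / 4" unfolding t_def by (simp add: power_add)
  have e2: "(t / 4) powr (- \<alpha>) = t powr (- \<alpha>) * 4 powr \<alpha>"
  proof -
    have "(t / 4) powr (- \<alpha>) = t powr (- \<alpha>) / 4 powr (- \<alpha>)" by (rule powr_divide)
    also have "4 powr (- \<alpha>) = inverse (4 powr \<alpha>)" by (rule powr_minus)
    finally show ?thesis by (simp only: divide_inverse inverse_inverse_eq)
  qed
  have e3: "t powr (- \<alpha>) * t powr \<beta> = t powr (\<beta> - \<alpha>)"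
    by (simp only: powr_add[symmetric]) simp
  have e4: "t powr (\<beta> - \<alpha>) = c powr (\<beta> - \<alpha>) * ((1/2) ^ j) powr (\<beta> - \<alpha>)"
    unfolding t_def by (rule powr_mult)
  have e5: "((1/2::real) ^ j) powr (\<beta> - \<alpha>) = ((1/2) powr (\<beta> - \<alpha>)) ^ j"
  proof -
    have h: "((1/2::real) ^ j) = (1/2) powr (real j)" by (rule powr_realpow[symmetric]) simp
    have "((1/2::real) ^ j) powr (\<beta> - \<alpha>) = (1/2) powr (real j * (\<beta> - \<alpha>))"
      unfolding h by (rule powr_powr)
    also have "\<dots> = ((1/2) powr (\<beta> - \<alpha>)) powr (real j)"
      by (subst powr_powr) (simp only: mult.commute)
    also have "\<dots> = ((1/2) powr (\<beta> - \<alpha>)) ^ j" by (rule powr_realpow) simp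
    finally show ?thesis .
  qed
  have "(c * (1/2) ^ (j + 2)) powr (- \<alpha>) * (c * (1/2) ^ j) powr \<beta>
      = (t powr (- \<alpha>) * 4 powr \<alpha>) * t powr \<beta>"
    unfolding e1 e2 t_def[symmetric] ..
  also have "\<dots> = 4 powr \<alpha> * (t powr (- \<alpha>) * t powr \<beta>)" by (simp only: mult_ac)
  also have "\<dots> = 4 powr \<alpha> * (c powr (\<beta> - \<alpha>) * ((1/2) powr (\<beta> - \<alpha>)) ^ j)"
    unfolding e3 e4 e5 ..
  also have "\<dots> = (4 powr \<alpha> * c powr (\<beta> - \<alpha>)) * ((1/2) powr (\<beta> - \<alpha>)) ^ j"
    by (simp only: mult_ac)
  finally show ?thesis .
qed

lemma j0_exists:
  fixes x c :: real
  assumes "0 < x" "x \<le> c" "0 < c"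
  shows "\<exists>j. c * (1/2) ^ (j + 1) < x \<and> x \<le> c * (1/2) ^ j"
proof -
  obtain n where "(1/2::real) ^ n < x / c" using real_arch_pow_inv[of "x / c" "1/2"] assms by auto
  hence ex: "c * (1/2) ^ n < x" using assms(3) by (simp add: field_simps)
  define n0 where "n0 = (LEAST n. c * (1/2::real) ^ n < x)"
  have n0: "c * (1/2) ^ n0 < x" unfolding n0_def by (rule LeastI[of _ n], rule ex)
  have "n0 \<noteq> 0" using n0 assms(2) by (cases "n0 = 0") auto
  then obtain j where j: "n0 = j + 1" by (metis Suc_eq_plus1 not0_implies_Suc)
  have "\<not> c * (1/2) ^ j < x" unfolding n0_def
    by (rule not_less_Least) (use j n0_def in simp)
  thus ?thesis using n0 j by (intro exI[of _ j]) simp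
qed



lemma edge_pos:
  assumes ms: "Metric_space M d" and PM: "P \<subseteq> M" and eg: "edge_graph P T" and e: "e \<in> T"
  shows "0 < edge_len d e"
proof -
  obtain x y where xy: "e = {x, y}" "x \<in> P" "y \<in> P" "x \<noteq> y" using eg e unfolding edge_graph_def by blast
  have xM: "x \<in> M" and yM: "y \<in> M" using xy PM by auto
  have "edge_len d e = d x y" using edge_len_eq[OF ms xM yM] xy(1) by simp
  moreover have "d x y \<noteq> 0" using Metric_space.zero[OF ms xM yM] xy(4) by simp
  moreover have "d x y \<ge> 0" using Metric_space.nonneg[OF ms] by simp
  ultimately show ?thesis by simp
qed

lemma geom_sum_bound:
  fixes q K0 :: real
  assumes "0 \<le> q" "q < 1" "0 \<le> K0"
  shows "(\<Sum>j<J. K0 * q ^ j) \<le> K0 / (1 - q)"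
proof -
  have s: "summable (\<lambda>j. q ^ j)" using assms by (simp add: summable_geometric)
  have "(\<Sum>j<J. q ^ j) \<le> (\<Sum>j. q ^ j)"
    by (rule sum_le_suminf[OF s]) (use assms(1) in simp_all)
  also have "\<dots> = 1 / (1 - q)" using assms by (simp add: suminf_geometric)
  finally have "K0 * (\<Sum>j<J. q ^ j) \<le> K0 * (1 / (1 - q))" using assms(3) by (rule mult_left_mono)
  thus ?thesis by (simp add: sum_distrib_left)
qed

lemma energy_bound:
  fixes \<alpha> \<beta> c B :: real
  assumes ms: "Metric_space M d" and mst: "is_MST M d P T"
    and c: "0 < c"
    and cnt: "\<And>j. real (card {e\<in>T. edge_len d e > c * (1/2) ^ j}) \<le> (c * (1/2) ^ (j + 1)) powr (- \<alpha>)"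
    and Bd: "\<And>e. e \<in> T \<Longrightarrow> edge_len d e \<le> B"
    and \<beta>: "0 < \<beta>" "\<alpha> < \<beta>"
  shows "tree_energy d \<beta> T \<le> (c * (1/2) ^ 1) powr (- \<alpha>) * B powr \<beta>
            + (4 powr \<alpha> * c powr (\<beta> - \<alpha>)) / (1 - (1/2) powr (\<beta> - \<alpha>))"
proof -
  have finP: "finite P" and PM: "P \<subseteq> M" and st: "spanning_tree P T" using mst unfolding is_MST_def by auto
  have eg: "edge_graph P T" using st unfolding spanning_tree_def by simp
  have finT: "finite T" by (rule st_fin[OF finP eg])
  have pos: "\<And>e. e \<in> T \<Longrightarrow> 0 < edge_len d e" using edge_pos[OF ms PM eg] by blast
  define A where "A j = {e\<in>T. edge_len d e > c * (1/2) ^ j}" for j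
  define w where "w j = (c * (1/2::real) ^ j) powr \<beta>" for j
  define q where "q = (1/2::real) powr (\<beta> - \<alpha>)"
  define K0 where "K0 = 4 powr \<alpha> * c powr (\<beta> - \<alpha>)"
  have q0: "0 \<le> q" unfolding q_def by simp
  have q1: "q < 1"
  proof -
    have "(1/2::real) powr (\<beta> - \<alpha>) < 1 powr (\<beta> - \<alpha>)" by (rule powr_less_mono2) (use \<beta> in simp_all)
    thus ?thesis unfolding q_def by simp
  qed
  have K0: "0 \<le> K0" unfolding K0_def by simp
  have AT: "A j \<subseteq> T" for j unfolding A_def by auto
  have A0: "A 0 = {e\<in>T. edge_len d e > c}" unfolding A_def by simp
  have split: "tree_energy d \<beta> T = (\<Sum>e\<in>T - A 0. edge_len d e powr \<beta>) + (\<Sum>e\<in>A 0. edge_len d e powr \<beta>)"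
    unfolding tree_energy_def by (rule sum.subset_diff[OF AT finT])
  have long: "(\<Sum>e\<in>A 0. edge_len d e powr \<beta>) \<le> (c * (1/2) ^ 1) powr (- \<alpha>) * B powr \<beta>"
  proof -
    have "(\<Sum>e\<in>A 0. edge_len d e powr \<beta>) \<le> (\<Sum>e\<in>A 0. B powr \<beta>)"
    proof (rule sum_mono)
      fix e assume "e \<in> A 0"
      hence eT: "e \<in> T" using AT by blast
      show "edge_len d e powr \<beta> \<le> B powr \<beta>"
        by (rule powr_mono2) (use \<beta> pos[OF eT] Bd[OF eT] in simp_all)
    qed
    also have "\<dots> = real (card (A 0)) * B powr \<beta>" by simp
    also have "\<dots> \<le> (c * (1/2) ^ (0 + 1)) powr (- \<alpha>) * B powr \<beta>"
      by (rule mult_right_mono) (use cnt[of 0] in \<open>simp_all add: A_def\<close>)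
    finally show ?thesis by simp
  qed
  have ev: "\<forall>e\<in>T. eventually (\<lambda>J. c * (1/2) ^ J < edge_len d e) sequentially"
  proof
    fix e assume eT: "e \<in> T"
    have "(\<lambda>J. c * (1/2::real) ^ J) \<longlonglongrightarrow> c * 0"
      by (intro tendsto_mult tendsto_const LIMSEQ_power_zero) simp
    hence "(\<lambda>J. c * (1/2::real) ^ J) \<longlonglongrightarrow> 0" by simp
    thus "eventually (\<lambda>J. c * (1/2) ^ J < edge_len d e) sequentially"
      using order_tendstoD(2) pos[OF eT] by blast
  qed
  have "eventually (\<lambda>J. \<forall>e\<in>T. c * (1/2) ^ J < edge_len d e) sequentially"
    by (rule eventually_ball_finite[OF finT ev])
  then obtain J where J: "\<forall>e\<in>T. c * (1/2) ^ J < edge_len d e"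
    unfolding eventually_sequentially by blast
  define ind where "ind e j = (if e \<in> A (j + 1) then w j else 0)" for e j
  have w0: "0 \<le> w j" for j unfolding w_def by simp
  have ind0: "0 \<le> ind e j" for e j unfolding ind_def using w0 by simp
  have per: "edge_len d e powr \<beta> \<le> (\<Sum>j<J. ind e j)" if e: "e \<in> T - A 0" for e
  proof -
    have eT: "e \<in> T" using e by simp
    have xc: "edge_len d e \<le> c" using e unfolding A0 by auto
    obtain j0 where j0: "c * (1/2) ^ (j0 + 1) < edge_len d e" "edge_len d e \<le> c * (1/2) ^ j0"
      using j0_exists[OF pos[OF eT] xc c] by blast
    have "j0 < J"
    proof (rule ccontr)
      assume "\<not> j0 < J"
      hence "(1/2::real) ^ j0 \<le> (1/2) ^ J" by (intro power_decreasing) simp_all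
      hence "c * (1/2::real) ^ j0 \<le> c * (1/2) ^ J" using c by simp
      thus False using j0(2) J eT by fastforce
    qed
    have "edge_len d e powr \<beta> \<le> w j0" unfolding w_def
      by (rule powr_mono2) (use \<beta> pos[OF eT] j0(2) in simp_all)
    also have "w j0 = ind e j0" unfolding ind_def A_def using j0(1) eT by simp
    also have "ind e j0 \<le> (\<Sum>j<J. ind e j)"
      by (rule member_le_sum) (use \<open>j0 < J\<close> ind0 in simp_all)
    finally show ?thesis .
  qed
  have short: "(\<Sum>e\<in>T - A 0. edge_len d e powr \<beta>) \<le> K0 / (1 - q)"
  proof -
    have "(\<Sum>e\<in>T - A 0. edge_len d e powr \<beta>) \<le> (\<Sum>e\<in>T - A 0. \<Sum>j<J. ind e j)"
      by (rule sum_mono) (rule per)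
    also have "\<dots> = (\<Sum>j<J. \<Sum>e\<in>T - A 0. ind e j)" by (rule sum.swap)
    also have "\<dots> \<le> (\<Sum>j<J. \<Sum>e\<in>T. ind e j)"
      by (rule sum_mono, rule sum_mono2) (use finT ind0 in auto)
    also have "\<dots> = (\<Sum>j<J. real (card (A (j + 1))) * w j)"
    proof (rule sum.cong[OF refl])
      fix j
      have "(\<Sum>e\<in>T. ind e j) = (\<Sum>e\<in>{e\<in>T. e \<in> A (j + 1)}. w j)"
        unfolding ind_def by (rule sum.inter_filter[symmetric, OF finT])
      also have "{e\<in>T. e \<in> A (j + 1)} = A (j + 1)" using AT by blast
      finally show "(\<Sum>e\<in>T. ind e j) = real (card (A (j + 1))) * w j" by simp
    qed
    also have "\<dots> \<le> (\<Sum>j<J. (c * (1/2) ^ (j + 2)) powr (- \<alpha>) * w j)"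
    proof (rule sum_mono)
      fix j
      have "real (card (A (j + 1))) \<le> (c * (1/2) ^ (j + 2)) powr (- \<alpha>)"
        using cnt[of "j + 1"] unfolding A_def by (simp add: add.assoc)
      thus "real (card (A (j + 1))) * w j \<le> (c * (1/2) ^ (j + 2)) powr (- \<alpha>) * w j"
        by (rule mult_right_mono) (rule w0)
    qed
    also have "\<dots> = (\<Sum>j<J. K0 * q ^ j)"
      unfolding w_def K0_def q_def using geom_term[OF c] by simp
    also have "\<dots> \<le> K0 / (1 - q)" by (rule geom_sum_bound[OF q0 q1 K0])
    finally show ?thesis .
  qed
  show ?thesis using split long short unfolding K0_def q_def by linarith
qed



lemma part2:
  fixes M :: "'a set" and d :: "'a \<Rightarrow> 'a \<Rightarrow> real" and \<beta> :: real
  assumes ms: "Metric_space M d" and Mne: "M \<noteq> {}" and hb: "dim_Box M d < ereal \<beta>"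
  shows "\<exists>C. \<forall>P T. is_MST M d P T \<longrightarrow> tree_energy d \<beta> T \<le> C"
proof -
  obtain \<alpha> where \<alpha>: "dim_Box M d < ereal \<alpha>" "ereal \<alpha> < ereal \<beta>" using ereal_dense2[OF hb] by blast
  have nn: "0 \<le> dim_Box M d" by (rule dim_Box_nonneg[OF Mne])
  have "(0::ereal) < ereal \<alpha>" using nn \<alpha>(1) by (rule order.strict_trans1)
  hence a0: "0 < \<alpha>" by simp
  have ab: "\<alpha> < \<beta>" using \<alpha>(2) by simp
  have b0: "0 < \<beta>" using a0 ab by simp
  have "eventually (\<lambda>r. box_ratio M d r < ereal \<alpha>) (at_right (0::real))"
    using Limsup_lessD[OF \<alpha>(1)[unfolded dim_Box_def]] .
  then obtain r0 :: real where r0: "0 < r0" and r0b: "\<And>r. 0 < r \<Longrightarrow> r < r0 \<Longrightarrow> box_ratio M d r < ereal \<alpha>"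
    unfolding eventually_at_right_field by auto
  define c where "c = min r0 1"
  have c: "0 < c" "c \<le> r0" "c \<le> 1" unfolding c_def using r0 by auto
  have good: "box_ratio M d (\<epsilon> / 2) < ereal \<alpha>" "\<epsilon> / 2 < 1" if "0 < \<epsilon>" "\<epsilon> \<le> c" for \<epsilon>
    using r0b[of "\<epsilon> / 2"] that c by simp_all
  define K where "K = nat \<lceil>(c / 2) powr (- \<alpha>)\<rceil>"
  have Kb: "card S \<le> K" if "pk M d (c / 2) S" for S
  proof -
    have "real (card S) \<le> (c / 2) powr (- \<alpha>)"
      using ratio_bound[OF _ _ _ that] c good[of c] by simp
    also have "\<dots> \<le> real K" unfolding K_def by (rule real_nat_ceiling_ge)
    finally show ?thesis by simp
  qed
  obtain B where B: "\<forall>x\<in>M. \<forall>y\<in>M. d x y \<le> B"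
    using bounded_from_pk[of M d "c / 2" K, OF ms _ Kb] c by auto
  define C where "C = (c * (1/2) ^ 1) powr (- \<alpha>) * B powr \<beta>
            + (4 powr \<alpha> * c powr (\<beta> - \<alpha>)) / (1 - (1/2) powr (\<beta> - \<alpha>))"
  have "tree_energy d \<beta> T \<le> C" if mst: "is_MST M d P T" for P T
  proof -
    have PM: "P \<subseteq> M" and st: "spanning_tree P T" using mst unfolding is_MST_def by auto
    have eg: "edge_graph P T" using st unfolding spanning_tree_def by simp
    have cnt: "real (card {e\<in>T. edge_len d e > c * (1/2) ^ j}) \<le> (c * (1/2) ^ (j + 1)) powr (- \<alpha>)" for j
    proof (cases "P = {}")
      case True
      hence "T = {}" using eg unfolding edge_graph_def by auto
      thus ?thesis by simp
    next
      case False
      have e0: "0 < c * (1/2::real) ^ j" using c by simp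
      have "(1/2::real) ^ j \<le> 1" by (rule power_le_one) simp_all
      hence e1: "c * (1/2::real) ^ j \<le> c" using c by (simp add: mult_left_le)
      have "real (card {e\<in>T. edge_len d e > c * (1/2) ^ j}) + 1 \<le> (c * (1/2) ^ j / 2) powr (- \<alpha>)"
        by (rule mst_count[OF ms mst False e0 good(2)[OF e0 e1] good(1)[OF e0 e1]])
      also have "c * (1/2) ^ j / 2 = c * (1/2::real) ^ (j + 1)" by simp
      finally show ?thesis by simp
    qed
    have Bd: "edge_len d e \<le> B" if e: "e \<in> T" for e
    proof -
      obtain x y where xy: "e = {x, y}" "x \<in> P" "y \<in> P" using eg e unfolding edge_graph_def by blast
      have xM: "x \<in> M" and yM: "y \<in> M" using xy PM by auto
      have "edge_len d e = d x y" using edge_len_eq[OF ms xM yM] xy(1) by simp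
      thus ?thesis using B xM yM by simp
    qed
    show ?thesis unfolding C_def by (rule energy_bound[OF ms mst c(1) cnt Bd b0 ab])
  qed
  thus ?thesis by blast
qed

lemma part1:
  fixes M :: "'a set" and d :: "'a \<Rightarrow> 'a \<Rightarrow> real"
  assumes ms: "Metric_space M d" and Mne: "M \<noteq> {}"
  shows "dim_MST M d \<le> dim_Box M d"
proof (rule dense_ge)
  fix y assume y: "dim_Box M d < y"
  obtain \<beta> where b: "dim_Box M d < ereal \<beta>" "ereal \<beta> < y" using ereal_dense2[OF y] by blast
  have nn: "0 \<le> dim_Box M d" by (rule dim_Box_nonneg[OF Mne])
  have "(0::ereal) < ereal \<beta>" using nn b(1) by (rule order.strict_trans1)
  hence b0: "0 \<le> \<beta>" by simp
  have "\<exists>C. \<forall>P T. is_MST M d P T \<longrightarrow> tree_energy d \<beta> T \<le> C" by (rule part2[OF ms Mne b(1)])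
  hence "ereal \<beta> \<in> {ereal \<beta> | \<beta>. \<beta> \<ge> 0 \<and> (\<exists>C. \<forall>P T. is_MST M d P T \<longrightarrow> tree_energy d \<beta> T \<le> C)}"
    using b0 by blast
  hence "dim_MST M d \<le> ereal \<beta>" unfolding dim_MST_def by (rule Inf_lower)
  thus "dim_MST M d \<le> y" using b(2) by simp
qed

theorem lemma6:
  fixes M :: "'a set" and d :: "'a \<Rightarrow> 'a \<Rightarrow> real"
  assumes "Metric_space M d" and "M \<noteq> {}"
  shows "dim_MST M d \<le> dim_Box M d \<and>
         (\<forall>\<beta>::real. dim_Box M d < ereal \<beta> \<longrightarrow>
            (\<exists>C. \<forall>P T. is_MST M d P T \<longrightarrow> tree_energy d \<beta> T \<le> C))"
  using part1[OF assms] part2[OF assms] by blast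

end
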